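(* If $X$ is a locally Menger Hausdorff $P$-space, then $w(X)\leq nw(X)^{\aleph_0}$.
   Context: $w(X)$ is the smallest cardinality of a base of $X$. A network for $X$ is a family $\mathcal{N}$ of subsets of $X$ such that for every $x\in X$ and every neighbourhood $U$ of $x$ there is $A\in\mathcal{N}$ with $x\in A\subseteq U$; $nw(X)$ is the smallest cardinality of a network for $X$. A space $X$ is Menger if for each sequence $(\mathcal{U}_n)$ of open covers of $X$ there is a sequence $(\mathcal{V}_n)$ with each $\mathcal{V}_n$ a finite subset of $\mathcal{U}_n$ and $\bigcup_{n}\bigcup\mathcal{V}_n=X$. A space $X$ is locally Menger if for each $x\in X$ there exist an open set $U$ and a Menger subspace $Y$ of $X$ with $x\in U\subseteq Y$. A $P$-space is a space in which every countable intersection of open sets is open. *)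

theory Defs
  imports "HOL-Analysis.Analysis"
begin

definition is_base :: "'a topology \<Rightarrow> 'a set set \<Rightarrow> bool" where
  "is_base X \<B> \<longleftrightarrow> (\<forall>B\<in>\<B>. openin X B) \<and>
     (\<forall>U. openin X U \<longrightarrow> (\<exists>\<C>\<subseteq>\<B>. \<Union>\<C> = U))"

definition is_network :: "'a topology \<Rightarrow> 'a set set \<Rightarrow> bool" where
  "is_network X \<N> \<longleftrightarrow> (\<forall>A\<in>\<N>. A \<subseteq> topspace X) \<and>
     (\<forall>x U. openin X U \<and> x \<in> U \<longrightarrow> (\<exists>A\<in>\<N>. x \<in> A \<and> A \<subseteq> U))"

definition Menger_space :: "'a topology \<Rightarrow> bool" where
  "Menger_space X \<longleftrightarrow>
     (\<forall>\<U> :: nat \<Rightarrow> 'a set set.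
        (\<forall>n. (\<forall>U\<in>\<U> n. openin X U) \<and> topspace X \<subseteq> \<Union>(\<U> n)) \<longrightarrow>
        (\<exists>\<V> :: nat \<Rightarrow> 'a set set. (\<forall>n. finite (\<V> n) \<and> \<V> n \<subseteq> \<U> n) \<and>
            topspace X \<subseteq> (\<Union>n. \<Union>(\<V> n))))"

definition locally_Menger :: "'a topology \<Rightarrow> bool" where
  "locally_Menger X \<longleftrightarrow>
     (\<forall>x\<in>topspace X. \<exists>U Y. openin X U \<and> x \<in> U \<and> U \<subseteq> Y \<and> Y \<subseteq> topspace X \<and>
        Menger_space (subtopology X Y))"

text \<open>P-space: every countable intersection of open sets is open
  (intersection taken inside the space, so the empty family gives the whole space).\<close>
definition P_space :: "'a topology \<Rightarrow> bool" where
  "P_space X \<longleftrightarrow>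
     (\<forall>\<F>. countable \<F> \<and> (\<forall>U\<in>\<F>. openin X U) \<longrightarrow> openin X (topspace X \<inter> \<Inter>\<F>))"

end

theory Submission
  imports Defs
begin

definition lind :: "'a topology \<Rightarrow> 'a set \<Rightarrow> bool" where
  "lind X S \<longleftrightarrow> S \<subseteq> topspace X \<and>
     (\<forall>\<U>. (\<forall>U\<in>\<U>. openin X U) \<and> S \<subseteq> \<Union>\<U> \<longrightarrow>
        (\<exists>\<V>. \<V> \<subseteq> \<U> \<and> countable \<V> \<and> S \<subseteq> \<Union>\<V>))"

lemma P_open:
  assumes "P_space X" "countable I" "\<And>i. i \<in> I \<Longrightarrow> openin X (F i)"
  shows "openin X (topspace X \<inter> \<Inter>(F ` I))"
  using assms unfolding P_space_def by auto

lemma lind_cover: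
  assumes "lind X S" "\<And>y. y \<in> S \<Longrightarrow> openin X (Op y)" "\<And>y. y \<in> S \<Longrightarrow> y \<in> Op y"
  shows "\<exists>T. countable T \<and> T \<subseteq> S \<and> S \<subseteq> \<Union>(Op ` T)"
proof -
  have "(\<forall>U\<in>Op ` S. openin X U) \<and> S \<subseteq> \<Union>(Op ` S)" using assms by auto
  then obtain \<V> where V: "\<V> \<subseteq> Op ` S" "countable \<V>" "S \<subseteq> \<Union>\<V>"
    using assms(1) unfolding lind_def by metis
  then obtain T where "countable T" "T \<subseteq> S" "\<V> = Op ` T"
    using countable_subset_image by metis
  then show ?thesis using V by auto
qed

lemma Menger_lind:
  assumes "Menger_space (subtopology X Y)" "Y \<subseteq> topspace X"
  shows "lind X Y"
  unfolding lind_def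
proof (intro conjI allI impI)
  show "Y \<subseteq> topspace X" by fact
  fix \<U> assume U: "(\<forall>U\<in>\<U>. openin X U) \<and> Y \<subseteq> \<Union>\<U>"
  define \<U>' where "\<U>' = (\<lambda>n::nat. (\<lambda>U. U \<inter> Y) ` \<U>)"
  have "\<forall>n. (\<forall>U\<in>\<U>' n. openin (subtopology X Y) U) \<and> topspace (subtopology X Y) \<subseteq> \<Union>(\<U>' n)"
    using U unfolding \<U>'_def by (auto simp: openin_subtopology)
  then obtain \<V> where V: "\<forall>n. finite (\<V> n) \<and> \<V> n \<subseteq> \<U>' n"
      "topspace (subtopology X Y) \<subseteq> (\<Union>n. \<Union>(\<V> n))"
    using assms(1) unfolding Menger_space_def by metis
  have "countable (\<Union>n. \<V> n)" using V(1) by (auto intro: countable_finite)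
  moreover have "(\<Union>n. \<V> n) \<subseteq> (\<lambda>U. U \<inter> Y) ` \<U>" using V(1) unfolding \<U>'_def by auto
  ultimately obtain \<W> where W: "countable \<W>" "\<W> \<subseteq> \<U>" "(\<Union>n. \<V> n) = (\<lambda>U. U \<inter> Y) ` \<W>"
    using countable_subset_image by metis
  have "Y \<subseteq> \<Union>\<W>"
  proof
    fix y assume "y \<in> Y"
    then have "y \<in> topspace (subtopology X Y)" using assms(2) by auto
    then obtain n S where "S \<in> \<V> n" "y \<in> S" using V(2) by auto
    then have "S \<in> (\<lambda>U. U \<inter> Y) ` \<W>" using W(3) by blast
    then show "y \<in> \<Union>\<W>" using \<open>y \<in> S\<close> by auto
  qed
  then show "\<exists>\<V>. \<V> \<subseteq> \<U> \<and> countable \<V> \<and> Y \<subseteq> \<Union>\<V>" using W by auto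
qed

lemma lind_closed:
  assumes "Hausdorff_space X" "P_space X" "lind X L"
  shows "closedin X L"
proof -
  have Lsub: "L \<subseteq> topspace X" using assms(3) unfolding lind_def by auto
  have "openin X (topspace X - L)"
  proof (subst openin_subopen, intro ballI)
    fix z assume z: "z \<in> topspace X - L"
    have "\<forall>y\<in>L. \<exists>Op W. openin X Op \<and> openin X W \<and> y \<in> Op \<and> z \<in> W \<and> disjnt Op W"
    proof
      fix y assume "y \<in> L"
      then have "y \<noteq> z" "y \<in> topspace X" using z Lsub by auto
      then show "\<exists>Op W. openin X Op \<and> openin X W \<and> y \<in> Op \<and> z \<in> W \<and> disjnt Op W"
        using assms(1) z unfolding Hausdorff_space_def by blast
    qed
    then obtain Op W where OW: "\<And>y. y \<in> L \<Longrightarrow> openin X (Op y) \<and> openin X (W y) \<and> y \<in> Op y \<and> z \<in> W y \<and> disjnt (Op y) (W y)"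
      by metis
    obtain T where T: "countable T" "T \<subseteq> L" "L \<subseteq> \<Union>(Op ` T)"
      using lind_cover[OF assms(3), of Op] OW by auto
    have "openin X (topspace X \<inter> \<Inter>(W ` T))"
      using P_open[OF assms(2) T(1), of W] OW T(2) by auto
    moreover have "z \<in> topspace X \<inter> \<Inter>(W ` T)" using z OW T(2) by auto
    moreover have "topspace X \<inter> \<Inter>(W ` T) \<subseteq> topspace X - L"
    proof
      fix w assume w: "w \<in> topspace X \<inter> \<Inter>(W ` T)"
      show "w \<in> topspace X - L"
      proof (rule ccontr)
        assume "w \<notin> topspace X - L"
        then have "w \<in> L" using w by auto
        then obtain t where "t \<in> T" "w \<in> Op t" using T(3) by auto
        then show False using w OW[of t] T(2) by (auto simp: disjnt_def)
      qed
    qed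
    ultimately show "\<exists>T. openin X T \<and> z \<in> T \<and> T \<subseteq> topspace X - L" by blast
  qed
  then show ?thesis using Lsub by (simp add: closedin_def)
qed

lemma lind_Int_closed:
  assumes "lind X L" "closedin X F"
  shows "lind X (L \<inter> F)"
  unfolding lind_def
proof (intro conjI allI impI)
  show "L \<inter> F \<subseteq> topspace X" using assms(1) unfolding lind_def by auto
  fix \<U> assume U: "(\<forall>U\<in>\<U>. openin X U) \<and> L \<inter> F \<subseteq> \<Union>\<U>"
  have "(\<forall>U\<in>insert (topspace X - F) \<U>. openin X U) \<and> L \<subseteq> \<Union>(insert (topspace X - F) \<U>)"
    using U assms unfolding lind_def by auto
  then obtain \<V> where V: "\<V> \<subseteq> insert (topspace X - F) \<U>" "countable \<V>" "L \<subseteq> \<Union>\<V>"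
    using assms(1) unfolding lind_def by metis
  show "\<exists>\<V>. \<V> \<subseteq> \<U> \<and> countable \<V> \<and> L \<inter> F \<subseteq> \<Union>\<V>"
    by (rule exI[of _ "\<V> - {topspace X - F}"]) (use V in auto)
qed

lemma local_nbhd:
  assumes "locally_Menger X" "x \<in> topspace X"
  obtains U Y where "openin X U" "x \<in> U" "U \<subseteq> Y" "Y \<subseteq> topspace X" "lind X Y"
  using assms Menger_lind unfolding locally_Menger_def by metis

lemma regular_lemma:
  assumes "locally_Menger X" "Hausdorff_space X" "P_space X" "openin X V" "x \<in> V"
  shows "\<exists>G. openin X G \<and> x \<in> G \<and> X closure_of G \<subseteq> V"
proof -
  have x: "x \<in> topspace X" using assms openin_subset by auto
  obtain U Y where UY: "openin X U" "x \<in> U" "U \<subseteq> Y" "Y \<subseteq> topspace X" "lind X Y"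
    using local_nbhd[OF assms(1) x] by metis
  have Ycl: "closedin X Y" using lind_closed assms UY by blast
  define L where "L = Y \<inter> (topspace X - (U \<inter> V))"
  have "closedin X (topspace X - (U \<inter> V))" using UY assms by auto
  then have lL: "lind X L" unfolding L_def using lind_Int_closed UY by blast
  have xL: "x \<notin> L" unfolding L_def using UY assms by auto
  have "\<forall>y\<in>L. \<exists>Op W. openin X Op \<and> openin X W \<and> y \<in> Op \<and> x \<in> W \<and> disjnt Op W"
  proof
    fix y assume "y \<in> L"
    then have "y \<noteq> x" "y \<in> topspace X" using xL UY unfolding L_def by auto
    then show "\<exists>Op W. openin X Op \<and> openin X W \<and> y \<in> Op \<and> x \<in> W \<and> disjnt Op W"
      using assms(2) x unfolding Hausdorff_space_def by blast
  qed
  then obtain Op W where OW: "\<And>y. y \<in> L \<Longrightarrow> openin X (Op y) \<and> openin X (W y) \<and> y \<in> Op y \<and> x \<in> W y \<and> disjnt (Op y) (W y)"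
    by metis
  obtain T where T: "countable T" "T \<subseteq> L" "L \<subseteq> \<Union>(Op ` T)"
    using lind_cover[OF lL, of Op] OW by auto
  define G where "G = (topspace X \<inter> \<Inter>(W ` T)) \<inter> U \<inter> V"
  have "openin X (topspace X \<inter> \<Inter>(W ` T))"
    using P_open[OF assms(3) T(1), of W] OW T(2) by auto
  then have oG: "openin X G" unfolding G_def using UY assms by auto
  have xG: "x \<in> G" unfolding G_def using x OW T(2) UY assms by auto
  have oO: "openin X (\<Union>(Op ` T))" using OW T(2) by auto
  have "G \<subseteq> topspace X - \<Union>(Op ` T)"
    unfolding G_def using OW T(2) by (fastforce simp: disjnt_def)
  then have c1: "X closure_of G \<subseteq> topspace X - \<Union>(Op ` T)"
    by (rule closure_of_minimal) (use oO in auto)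
  have "G \<subseteq> Y" unfolding G_def using UY by auto
  then have c2: "X closure_of G \<subseteq> Y" using closure_of_minimal Ycl by blast
  have "X closure_of G \<subseteq> U \<inter> V"
  proof
    fix z assume "z \<in> X closure_of G"
    then have "z \<in> Y" "z \<notin> L" using c1 c2 T(3) by auto
    then show "z \<in> U \<inter> V" unfolding L_def using UY by auto
  qed
  then show ?thesis using oG xG by auto
qed

lemma zero_dim_lemma:
  assumes "locally_Menger X" "Hausdorff_space X" "P_space X" "openin X V" "x \<in> V"
  shows "\<exists>K. openin X K \<and> closedin X K \<and> lind X K \<and> x \<in> K \<and> K \<subseteq> V"
proof -
  have x: "x \<in> topspace X" using assms openin_subset by auto
  obtain U Y where UY: "openin X U" "x \<in> U" "U \<subseteq> Y" "Y \<subseteq> topspace X" "lind X Y"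
    using local_nbhd[OF assms(1) x] by metis
  define G where "G = rec_nat (U \<inter> V) (\<lambda>_ S. SOME H. openin X H \<and> x \<in> H \<and> X closure_of H \<subseteq> S)"
  have G0: "G 0 = U \<inter> V" unfolding G_def by simp
  have GS: "G (Suc n) = (SOME H. openin X H \<and> x \<in> H \<and> X closure_of H \<subseteq> G n)" for n
    unfolding G_def by simp
  have Gn: "openin X (G n) \<and> x \<in> G n \<and> X closure_of (G (Suc n)) \<subseteq> G n" for n
  proof (induction n)
    case 0
    have "openin X (G 0) \<and> x \<in> G 0" using G0 UY assms by auto
    then have ex0: "\<exists>H. openin X H \<and> x \<in> H \<and> X closure_of H \<subseteq> G 0"
      using regular_lemma[OF assms(1-3)] by blast
    show ?case using someI_ex[OF ex0] GS[of 0] \<open>openin X (G 0) \<and> x \<in> G 0\<close> by simp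
  next
    case (Suc n)
    have h: "openin X (G (Suc n)) \<and> x \<in> G (Suc n)"
      using someI_ex[of "\<lambda>H. openin X H \<and> x \<in> H \<and> X closure_of H \<subseteq> G n"]
        regular_lemma[OF assms(1-3)] Suc GS[of n] by auto
    then have ex1: "\<exists>H. openin X H \<and> x \<in> H \<and> X closure_of H \<subseteq> G (Suc n)"
      using regular_lemma[OF assms(1-3)] by blast
    show ?case using someI_ex[OF ex1] GS[of "Suc n"] h by simp
  qed
  define K where "K = topspace X \<inter> \<Inter>(range G)"
  have oK: "openin X K" unfolding K_def using P_open[OF assms(3), of UNIV G] Gn by auto
  have Keq: "K = \<Inter>(range (\<lambda>n. X closure_of (G (Suc n))))"
  proof
    show "K \<subseteq> \<Inter>(range (\<lambda>n. X closure_of (G (Suc n))))"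
      unfolding K_def using closure_of_subset[OF openin_subset[OF Gn[THEN conjunct1]]] by blast
    show "\<Inter>(range (\<lambda>n. X closure_of (G (Suc n)))) \<subseteq> K"
    proof
      fix z assume z: "z \<in> \<Inter>(range (\<lambda>n. X closure_of (G (Suc n))))"
      then have "z \<in> topspace X" using closure_of_subset_topspace by fastforce
      moreover have "z \<in> G n" for n using z Gn[of n] by auto
      ultimately show "z \<in> K" unfolding K_def by auto
    qed
  qed
  have cK: "closedin X K" unfolding Keq by (rule closedin_Inter) auto
  have KV: "K \<subseteq> U \<inter> V" unfolding K_def using G0 by auto
  have "lind X (Y \<inter> K)" using lind_Int_closed UY cK by blast
  moreover have "Y \<inter> K = K" using KV UY by auto
  ultimately have "lind X K" by simp
  moreover have "x \<in> K" unfolding K_def using x Gn by auto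
  ultimately show ?thesis using oK cK KV by auto
qed

lemma enc_pairs:
  assumes "countable P" "P \<noteq> {}" "P \<subseteq> N \<times> N"
  shows "\<exists>f\<in>Func (UNIV::nat set) N. range (\<lambda>n. (f (2*n), f (2*n+1))) = P"
proof -
  define p where "p = from_nat_into P"
  define f where "f = (\<lambda>n::nat. if even n then fst (p (n div 2)) else snd (p (n div 2)))"
  have pP: "p n \<in> P" for n unfolding p_def by (rule from_nat_into[OF assms(2)])
  have f1: "f (2*n) = fst (p n)" for n unfolding f_def by simp
  have f2: "f (2*n+1) = snd (p n)" for n unfolding f_def by simp
  have "(\<lambda>n. (f (2*n), f (2*n+1))) = p" by (rule ext) (simp only: f1 f2 prod.collapse)
  moreover have "range p = P" unfolding p_def by (rule range_from_nat_into[OF assms(2,1)])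
  moreover have "f n \<in> N" for n
  proof -
    have "p (n div 2) \<in> N \<times> N" using pP assms(3) by blast
    then show ?thesis unfolding f_def by (auto simp: mem_Times_iff)
  qed
  then have "f \<in> Func UNIV N" unfolding Func_def by blast
  ultimately show ?thesis by auto
qed

theorem theorem3p11:
  fixes X :: "'a topology"
  assumes "locally_Menger X" and "Hausdorff_space X" and "P_space X"
  shows "\<forall>\<N>. is_network X \<N> \<longrightarrow>
           (\<exists>\<B>. is_base X \<B> \<and>
              ordLeq3 (card_of \<B>) (BNF_Cardinal_Arithmetic.cexp (card_of \<N>) (card_of (UNIV :: nat set))))"
proof (intro allI impI)
  fix N assume net: "is_network X N"
  define good where "good = (\<lambda>A A' C. openin X C \<and> closedin X C \<and> lind X C \<and> A \<subseteq> C \<and> C \<inter> A' = {})"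
  define Cf where "Cf = (\<lambda>q. if \<exists>C. good (fst q) (snd q) C then SOME C. good (fst q) (snd q) C else topspace X)"
  have Cgood: "good A A' C \<Longrightarrow> good A A' (Cf (A, A'))" for A A' C
    unfolding Cf_def using someI[of "good A A'" C] by auto
  have Cnot: "\<not> (\<exists>C. good A A' C) \<Longrightarrow> Cf (A, A') = topspace X" for A A'
    unfolding Cf_def by auto
  have Coc: "openin X (Cf q) \<and> closedin X (Cf q)" for q
  proof (cases "\<exists>C. good (fst q) (snd q) C")
    case True
    then obtain C where "good (fst q) (snd q) C" by blast
    from Cgood[OF this] show ?thesis unfolding good_def by simp
  next
    case False
    then show ?thesis using Cnot[of "fst q" "snd q"] by simp
  qed
  define gB where "gB = (\<lambda>f. topspace X \<inter> \<Inter>(range (\<lambda>n::nat. Cf (f (2*n), f (2*n+1)))))"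
  define B where "B = gB ` Func (UNIV::nat set) N"
  have card: "ordLeq3 (card_of B) (BNF_Cardinal_Arithmetic.cexp (card_of N) (card_of (UNIV :: nat set)))"
    unfolding B_def cexp_def Field_card_of by (rule card_of_image)
  have ogB: "openin X (gB f)" for f
    unfolding gB_def by (rule P_open[OF assms(3)]) (auto simp: Coc)
  have oB: "\<forall>b\<in>B. openin X b"
    unfolding B_def using ogB by auto
  have cover: "\<exists>b\<in>B. x \<in> b \<and> b \<subseteq> U" if U: "openin X U" "x \<in> U" for U x
  proof -
    obtain K where K: "openin X K" "closedin X K" "lind X K" "x \<in> K" "K \<subseteq> U"
      using zero_dim_lemma[OF assms U] by blast
    obtain A where A: "A \<in> N" "x \<in> A" "A \<subseteq> K"
      using net K unfolding is_network_def by blast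
    have Ksub: "K \<subseteq> topspace X" using K openin_subset by auto
    obtain q0 where q0: "q0 \<in> N \<times> N" "fst q0 = A" "openin X (Cf q0)" "closedin X (Cf q0)"
      "lind X (Cf q0)" "A \<subseteq> Cf q0"
    proof (cases "K = topspace X")
      case True
      have "\<not> (\<exists>C. good A A C)" unfolding good_def using A by auto
      then have "Cf (A, A) = topspace X" using Cnot by blast
      then show ?thesis using that[of "(A,A)"] A K True Coc by auto
    next
      case False
      then obtain z where z: "z \<in> topspace X - K" using Ksub by auto
      have "openin X (topspace X - K)" using K by auto
      then obtain A'' where A'': "A'' \<in> N" "z \<in> A''" "A'' \<subseteq> topspace X - K"
        using net z unfolding is_network_def by blast
      have "good A A'' K" unfolding good_def using K A A'' by auto
      from Cgood[OF this] show ?thesis using that[of "(A,A'')"] A A'' unfolding good_def by auto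
    qed
    define C0 where "C0 = Cf q0"
    define L0 where "L0 = C0 \<inter> (topspace X - K)"
    have lL0: "lind X L0" unfolding L0_def C0_def
      using lind_Int_closed[OF q0(5)] K by auto
    have "\<forall>y\<in>L0. \<exists>A'\<in>N. y \<in> A' \<and> A' \<subseteq> topspace X - K"
    proof
      fix y assume "y \<in> L0"
      moreover have "openin X (topspace X - K)" using K by auto
      ultimately show "\<exists>A'\<in>N. y \<in> A' \<and> A' \<subseteq> topspace X - K"
        using net unfolding is_network_def L0_def by blast
    qed
    then obtain a' where a': "\<And>y. y \<in> L0 \<Longrightarrow> a' y \<in> N \<and> y \<in> a' y \<and> a' y \<subseteq> topspace X - K"
      by metis
    define D where "D = (\<lambda>y. Cf (A, a' y))"
    have Dg: "good A (a' y) (D y)" if "y \<in> L0" for y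
    proof -
      have "good A (a' y) K" unfolding good_def using K A a'[OF that] by auto
      from Cgood[OF this] show ?thesis unfolding D_def .
    qed
    have "\<exists>T. countable T \<and> T \<subseteq> L0 \<and> L0 \<subseteq> \<Union>((\<lambda>y. topspace X - D y) ` T)"
    proof (rule lind_cover[OF lL0])
      fix y assume y: "y \<in> L0"
      show "openin X (topspace X - D y)" using Dg[OF y] unfolding good_def by auto
      show "y \<in> topspace X - D y" using Dg[OF y] a'[OF y] unfolding good_def L0_def by auto
    qed
    then obtain T where T: "countable T" "T \<subseteq> L0" "L0 \<subseteq> \<Union>((\<lambda>y. topspace X - D y) ` T)"
      by blast
    define P where "P = insert q0 ((\<lambda>y. (A, a' y)) ` T)"
    have Pc: "countable P" "P \<noteq> {}" "P \<subseteq> N \<times> N"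
      unfolding P_def using T q0 A a' by auto
    obtain f :: "nat \<Rightarrow> 'a set" where f: "f \<in> Func (UNIV::nat set) N" "range (\<lambda>n. (f (2*n), f (2*n+1))) = P"
      using enc_pairs[OF Pc] by blast
    have gf: "gB f = topspace X \<inter> \<Inter>(Cf ` P)"
    proof -
      have "range (\<lambda>n::nat. Cf (f (2*n), f (2*n+1))) = Cf ` range (\<lambda>n. (f (2*n), f (2*n+1)))"
        by auto
      then show ?thesis unfolding gB_def using f(2) by simp
    qed
    have "gB f \<in> B" unfolding B_def using f(1) by auto
    moreover have "x \<in> gB f"
    proof -
      have "x \<in> topspace X" using U openin_subset by auto
      moreover have "x \<in> Cf q0" using q0 A by auto
      moreover have "x \<in> D y" if "y \<in> T" for y using Dg[of y] that T(2) A unfolding good_def by auto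
      ultimately show ?thesis unfolding gf P_def D_def by auto
    qed
    moreover have "gB f \<subseteq> U"
    proof
      fix z assume z: "z \<in> gB f"
      have zC: "z \<in> C0" "z \<in> topspace X" using z unfolding gf P_def C0_def by auto
      have zD: "z \<in> D y" if "y \<in> T" for y using z that unfolding gf P_def D_def by auto
      have "z \<in> K"
      proof (rule ccontr)
        assume "z \<notin> K"
        then have "z \<in> L0" unfolding L0_def using zC by auto
        then obtain y where "y \<in> T" "z \<notin> D y" using T(3) by auto
        then show False using zD by auto
      qed
      then show "z \<in> U" using K by auto
    qed
    ultimately show ?thesis by blast
  qed
  have "is_base X B" unfolding is_base_def
  proof (intro conjI allI impI)
    show "\<forall>b\<in>B. openin X b" by fact
    fix U assume U: "openin X U"
    show "\<exists>C\<subseteq>B. \<Union>C = U"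
    proof (intro exI[of _ "{b\<in>B. b \<subseteq> U}"] conjI)
      show "\<Union>{b\<in>B. b \<subseteq> U} = U" using cover[OF U] by blast
    qed auto
  qed
  then show "\<exists>\<B>. is_base X \<B> \<and> ordLeq3 (card_of \<B>) (BNF_Cardinal_Arithmetic.cexp (card_of N) (card_of (UNIV :: nat set)))"
    using card by blast
qed

end
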